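(* Let $f(x_1,x_2)=(-2+x_1+x_2)^2$ and $g(x_1,x_2)=1-x_1^2-x_2^2$; the global minimum of $f$ on $\{x: g(x)\geqslant 0\}$ is $2(3-2\sqrt{2})>0$. For every $r\in\mathbb{N}$ and every $\lambda\geqslant 0$, there do not exist SDSOS polynomials $\sigma_0,\sigma_1$ such that $$(x_1^2+x_2^2)^r\,(f(x_1,x_2)-\lambda)=\sigma_0(x_1,x_2)+\sigma_1(x_1,x_2)\,g(x_1,x_2).$$ Hence the optimal value of the r-SDSOS (and therefore of the r-DSOS) relaxation, $\sup\{\lambda: (x_1^2+x_2^2)^r(f-\lambda)=\sigma_0+\sigma_1 g,\ \sigma_0,\sigma_1 \text{ SDSOS (resp. DSOS)}\}$, is at most $0$ for every $r$, so these hierarchies do not converge to the global minimum.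
   Context: For $\alpha\in\mathbb{N}^2$ write $x^\alpha=x_1^{\alpha_1}x_2^{\alpha_2}$. A polynomial is SDSOS if it is of the form $\sum_k (p_k x^{\alpha(k)}+q_k x^{\beta(k)})^2$ (finite sum) with $p_k,q_k\in\mathbb{R}$ and $\alpha(k),\beta(k)\in\mathbb{N}^2$. A polynomial is DSOS if it is a finite nonnegative combination of polynomials of the forms $(x^\alpha)^2$, $(x^\alpha+x^\beta)^2$, $(x^\alpha-x^\beta)^2$; every DSOS polynomial is SDSOS. *)

theory Defs
  imports Complex_Main
begin

text \<open>Polynomials in two real variables are represented by their polynomial
functions real => real => real (two real polynomials are equal iff their
functions on R^2 agree).\<close>

definition mono2 :: "nat \<times> nat \<Rightarrow> real \<Rightarrow> real \<Rightarrow> real" where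
  "mono2 a x1 x2 = x1 ^ fst a * x2 ^ snd a"

definition sdsos :: "(real \<Rightarrow> real \<Rightarrow> real) \<Rightarrow> bool" where
  "sdsos s \<longleftrightarrow> (\<exists>ts :: (real \<times> real \<times> (nat \<times> nat) \<times> (nat \<times> nat)) list.
      \<forall>x1 x2. s x1 x2 =
        (\<Sum>(p, q, a, b) \<leftarrow> ts. (p * mono2 a x1 x2 + q * mono2 b x1 x2) ^ 2))"

definition f_ex :: "real \<Rightarrow> real \<Rightarrow> real" where
  "f_ex x1 x2 = (-2 + x1 + x2) ^ 2"

definition g_ex :: "real \<Rightarrow> real \<Rightarrow> real" where
  "g_ex x1 x2 = 1 - x1 ^ 2 - x2 ^ 2"

end

theory Submission
  imports Defs
begin

lemma sgn_pow: "((-1::real) ^ n = 1) \<or> ((-1::real) ^ n = -1)"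
  by (cases "even n") auto

lemma key4:
  fixes P Q e1 e2 f1 f2 :: real
  assumes "e1 = 1 \<or> e1 = -1" "e2 = 1 \<or> e2 = -1" "f1 = 1 \<or> f1 = -1" "f2 = 1 \<or> f2 = -1"
  shows "0 \<le> (P+Q)^2 + (e1*P+f1*Q)^2 + (e2*P+f2*Q)^2 - (e1*e2*P+f1*f2*Q)^2"
proof -
  have "(P+Q)^2 + (e1*P+f1*Q)^2 + (e2*P+f2*Q)^2 - (e1*e2*P+f1*f2*Q)^2 = 2*(P+Q)^2
     \<or> (P+Q)^2 + (e1*P+f1*Q)^2 + (e2*P+f2*Q)^2 - (e1*e2*P+f1*f2*Q)^2 = 2*(P-Q)^2"
    using assms by (elim disjE) (simp_all add: power2_eq_square algebra_simps)
  then show ?thesis using zero_le_power2[of "P+Q"] zero_le_power2[of "P-Q"] by linarith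
qed

definition Lf :: "(real \<Rightarrow> real \<Rightarrow> real) \<Rightarrow> real" where
  "Lf s = s (sqrt 2/2) (sqrt 2/2) + s (-(sqrt 2/2)) (sqrt 2/2) + s (sqrt 2/2) (-(sqrt 2/2))
         - s (-(sqrt 2/2)) (-(sqrt 2/2))"

lemma term_nonneg:
  "0 \<le> Lf (\<lambda>x1 x2. (p * mono2 a x1 x2 + q * mono2 b x1 x2) ^ 2)"
proof -
  define c :: real where "c = sqrt 2/2"
  obtain a1 a2 where a: "a = (a1,a2)" by (cases a)
  obtain b1 b2 where b: "b = (b1,b2)" by (cases b)
  define P where "P = p * (c^a1*c^a2)"
  define Q where "Q = q * (c^b1*c^b2)"
  have "Lf (\<lambda>x1 x2. (p * mono2 a x1 x2 + q * mono2 b x1 x2) ^ 2)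
     = (P+Q)^2 + ((-1)^a1*P+(-1)^b1*Q)^2 + ((-1)^a2*P+(-1)^b2*Q)^2
        - ((-1)^a1*(-1)^a2*P+(-1)^b1*(-1)^b2*Q)^2"
    unfolding Lf_def c_def[symmetric] P_def Q_def a b mono2_def
    by (simp add: power_minus[of c] algebra_simps)
  also have "\<dots> \<ge> 0" by (rule key4) (simp_all add: sgn_pow)
  finally show ?thesis .
qed

lemma sdsos_L: assumes "sdsos s" shows "0 \<le> Lf s"
proof -
  obtain ts where ts: "\<forall>x1 x2. s x1 x2 =
        (\<Sum>(p, q, a, b) \<leftarrow> ts. (p * mono2 a x1 x2 + q * mono2 b x1 x2) ^ 2)"
    using assms unfolding sdsos_def by blast
  have "0 \<le> Lf (\<lambda>x1 x2. \<Sum>(p, q, a, b) \<leftarrow> ts. (p * mono2 a x1 x2 + q * mono2 b x1 x2) ^ 2)"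
  proof (induction ts)
    case Nil then show ?case by (simp add: Lf_def)
  next
    case (Cons t ts)
    obtain p q a b where t: "t = (p,q,a,b)" by (cases t) auto
    have "Lf (\<lambda>x1 x2. \<Sum>(p, q, a, b) \<leftarrow> t # ts. (p * mono2 a x1 x2 + q * mono2 b x1 x2) ^ 2)
      = Lf (\<lambda>x1 x2. (p * mono2 a x1 x2 + q * mono2 b x1 x2) ^ 2)
       + Lf (\<lambda>x1 x2. \<Sum>(p, q, a, b) \<leftarrow> ts. (p * mono2 a x1 x2 + q * mono2 b x1 x2) ^ 2)"
      unfolding t Lf_def by simp
    then show ?case using Cons term_nonneg by simp
  qed
  moreover have "s = (\<lambda>x1 x2. \<Sum>(p, q, a, b) \<leftarrow> ts. (p * mono2 a x1 x2 + q * mono2 b x1 x2) ^ 2)"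
    using ts by blast
  ultimately show ?thesis by simp
qed

lemma s2: "sqrt 2 * sqrt 2 = (2::real)" by simp

theorem mainTheorem4:
  shows "(\<forall>x1 x2. g_ex x1 x2 \<ge> 0 \<longrightarrow> f_ex x1 x2 \<ge> 2 * (3 - 2 * sqrt 2))
       \<and> (\<exists>x1 x2. g_ex x1 x2 \<ge> 0 \<and> f_ex x1 x2 = 2 * (3 - 2 * sqrt 2))
       \<and> 2 * (3 - 2 * sqrt 2) > 0
       \<and> (\<forall>(r::nat) (lam::real). lam \<ge> 0 \<longrightarrow>
            \<not> (\<exists>\<sigma>0 \<sigma>1. sdsos \<sigma>0 \<and> sdsos \<sigma>1 \<and>
                 (\<forall>x1 x2. (x1 ^ 2 + x2 ^ 2) ^ r * (f_ex x1 x2 - lam)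
                          = \<sigma>0 x1 x2 + \<sigma>1 x1 x2 * g_ex x1 x2)))"
proof -
  have sq: "(2 - sqrt 2)^2 = 2 * (3 - 2 * sqrt 2)"
    by (simp add: power2_eq_square algebra_simps)
  have lt: "sqrt 2 < 2"
  proof -
    have "sqrt 2 < sqrt (2^2)" by (subst real_sqrt_less_iff) simp
    then show ?thesis by simp
  qed
  have lt2: "sqrt 2 < 3/2"
  proof -
    have "sqrt 2 < sqrt ((3/2)^2)" by (subst real_sqrt_less_iff) (simp add: power2_eq_square)
    then show ?thesis by simp
  qed
  have part1: "\<forall>x1 x2. g_ex x1 x2 \<ge> 0 \<longrightarrow> f_ex x1 x2 \<ge> 2 * (3 - 2 * sqrt 2)"
  proof (intro allI impI)
  fix x1 x2 :: real
  assume g: "0 \<le> g_ex x1 x2"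
  have "(x1+x2)^2 \<le> 2" using g unfolding g_ex_def
    using sum_squares_ge_zero[of "x1-x2" 0] by (simp add: power2_eq_square algebra_simps)
  hence "x1 + x2 \<le> sqrt 2" using real_le_rsqrt by blast
  hence "(2 - sqrt 2)^2 \<le> (2 - x1 - x2)^2" using lt
    by (intro power_mono) auto
  also have "(2 - x1 - x2)^2 = f_ex x1 x2" unfolding f_ex_def by (simp add: power2_eq_square algebra_simps)
  finally show "f_ex x1 x2 \<ge> 2 * (3 - 2 * sqrt 2)" using sq by simp
  qed
  have c2: "(sqrt 2/2)^2 = (1/2::real)" by (simp add: power_divide)
  have part2: "\<exists>x1 x2. g_ex x1 x2 \<ge> 0 \<and> f_ex x1 x2 = 2 * (3 - 2 * sqrt 2)"
  proof (intro exI conjI)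
    show "g_ex (sqrt 2/2) (sqrt 2/2) \<ge> 0" unfolding g_ex_def using c2 by simp
    have "f_ex (sqrt 2/2) (sqrt 2/2) = (2 - sqrt 2)^2" unfolding f_ex_def
      by (simp add: power2_eq_square algebra_simps)
    then show "f_ex (sqrt 2/2) (sqrt 2/2) = 2 * (3 - 2 * sqrt 2)" using sq by simp
  qed
  have part3: "2 * (3 - 2 * sqrt 2) > (0::real)" using lt2 by simp
  have part4: "\<forall>(r::nat) (lam::real). lam \<ge> 0 \<longrightarrow> \<not> (\<exists>\<sigma>0 \<sigma>1. sdsos \<sigma>0 \<and> sdsos \<sigma>1 \<and>
                 (\<forall>x1 x2. (x1 ^ 2 + x2 ^ 2) ^ r * (f_ex x1 x2 - lam)
                          = \<sigma>0 x1 x2 + \<sigma>1 x1 x2 * g_ex x1 x2))"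
  proof (intro allI impI notI)
    fix r :: nat and lam :: real
    assume lam: "lam \<ge> 0"
    assume "\<exists>\<sigma>0 \<sigma>1. sdsos \<sigma>0 \<and> sdsos \<sigma>1 \<and>
                 (\<forall>x1 x2. (x1 ^ 2 + x2 ^ 2) ^ r * (f_ex x1 x2 - lam)
                          = \<sigma>0 x1 x2 + \<sigma>1 x1 x2 * g_ex x1 x2)"
    then obtain \<sigma>0 \<sigma>1 where s0: "sdsos \<sigma>0" and eq: "\<forall>x1 x2. (x1 ^ 2 + x2 ^ 2) ^ r * (f_ex x1 x2 - lam)
                          = \<sigma>0 x1 x2 + \<sigma>1 x1 x2 * g_ex x1 x2" by blast
    have c2: "(sqrt 2/2)^2 = (1/2::real)" by (simp add: power_divide)
    have gz: "g_ex (sqrt 2/2) (sqrt 2/2) = 0" "g_ex (-(sqrt 2/2)) (sqrt 2/2) = 0"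
      "g_ex (sqrt 2/2) (-(sqrt 2/2)) = 0" "g_ex (-(sqrt 2/2)) (-(sqrt 2/2)) = 0"
      unfolding g_ex_def using c2 by simp_all
    have pt: "\<sigma>0 x y = f_ex x y - lam" if "x^2 = 1/2" "y^2 = 1/2" for x y
    proof -
      have "g_ex x y = 0" "x^2 + y^2 = 1" unfolding g_ex_def using that by simp_all
      then show ?thesis using eq[rule_format, of x y] by simp
    qed
    have m2: "(-(sqrt 2/2))^2 = (1/2::real)" using c2 by simp
    have "Lf \<sigma>0 = f_ex (sqrt 2/2) (sqrt 2/2) + f_ex (-(sqrt 2/2)) (sqrt 2/2)
       + f_ex (sqrt 2/2) (-(sqrt 2/2)) - f_ex (-(sqrt 2/2)) (-(sqrt 2/2)) - 2*lam"
      unfolding Lf_def using pt[OF c2 c2] pt[OF m2 c2] pt[OF c2 m2] pt[OF m2 m2] by simp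
    also have "\<dots> = 8 - 8 * sqrt 2 - 2 * lam"
      unfolding f_ex_def
      by (simp add: power2_eq_square algebra_simps)
    also have "\<dots> < 0" proof - have "1 < sqrt (2::real)" by simp then show ?thesis using lam by linarith qed
    finally show False using sdsos_L[OF s0] by simp
  qed
  show ?thesis using part1 part2 part3 part4 by blast
qed

end
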